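(* Let $G$ be an amenable group and, for $i=1,\ldots,n$, let $A_i\subseteq G$ have positive Banach density $d(A_i)=\alpha_i$. Let $\beta=\prod_{i=1}^n\alpha_i$, $0\le\varepsilon<\beta^2$, and $r=\left\lfloor\frac{\beta-\varepsilon}{\beta^2-\varepsilon}\right\rfloor$. Then $\bigcap_{i=1}^n\Delta_\varepsilon(A_i)$ is $r$-syndetic, and its lower Banach density is at least $1/r$.
   Context: A finite $K\subseteq G$ is $(H,\varepsilon)$-invariant if $K\ne\emptyset$ and $|hK\triangle K|/|K|<\varepsilon$ for all $h\in H$; $G$ is amenable if such $K$ exist for every finite $H\subseteq G$ and $\varepsilon>0$. $d(A)$ is the supremum of all $\alpha$ such that for every finite $H$ and $\varepsilon>0$ there is an $(H,\varepsilon)$-invariant $K$ with $|A\cap K|/|K|\ge\alpha$; the lower Banach density $\underline{d}(A)$ is the supremum of all $\alpha$ such that for some finite $H$ and some $\varepsilon>0$ every $(H,\varepsilon)$-invariant $K$ satisfies $|A\cap K|/|K|\ge\alpha$. $\Delta_\varepsilon(A)=\{g\in G\mid d(A\cap gA)>\varepsilon\}$. A set $S\subseteq G$ is $k$-syndetic if $G=FS$ for some $F\subseteq G$ with $|F|\le k$. *)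

theory Defs
  imports "HOL-Analysis.Analysis"
begin

text \<open>The group G is the ambient type 'a of class group_add (not assumed commutative);
  the group operation is written +, so the left translate hK is (\<lambda>k. h + k) ` K.\<close>

definition ltrans :: "'a::group_add \<Rightarrow> 'a set \<Rightarrow> 'a set" where
  "ltrans h K = (\<lambda>k. h + k) ` K"

definition invariant_set :: "'a::group_add set \<Rightarrow> real \<Rightarrow> 'a set \<Rightarrow> bool" where
  "invariant_set H \<epsilon> K \<longleftrightarrow> finite K \<and> K \<noteq> {} \<and>
     (\<forall>h\<in>H. real (card (ltrans h K - K \<union> (K - ltrans h K))) / real (card K) < \<epsilon>)"

definition amenable :: "'a::group_add itself \<Rightarrow> bool" where
  "amenable _ \<longleftrightarrow> (\<forall>H::'a set. \<forall>\<epsilon>>0. finite H \<longrightarrow> (\<exists>K. invariant_set H \<epsilon> K))"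

definition banach_density :: "'a::group_add set \<Rightarrow> real" where
  "banach_density A = Sup {\<alpha>. \<forall>H \<epsilon>. finite H \<and> \<epsilon> > 0 \<longrightarrow>
      (\<exists>K. invariant_set H \<epsilon> K \<and> real (card (A \<inter> K)) / real (card K) \<ge> \<alpha>)}"

definition lower_banach_density :: "'a::group_add set \<Rightarrow> real" where
  "lower_banach_density A = Sup {\<alpha>. \<exists>H \<epsilon>. finite H \<and> \<epsilon> > 0 \<and>
      (\<forall>K. invariant_set H \<epsilon> K \<longrightarrow> real (card (A \<inter> K)) / real (card K) \<ge> \<alpha>)}"

definition Delta :: "real \<Rightarrow> 'a::group_add set \<Rightarrow> 'a set" where
  "Delta \<epsilon> A = {g. banach_density (A \<inter> ltrans g A) > \<epsilon>}"

definition syndetic :: "nat \<Rightarrow> 'a::group_add set \<Rightarrow> bool" where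
  "syndetic k S \<longleftrightarrow> (\<exists>F. finite F \<and> card F \<le> k \<and> UNIV = (\<Union>f\<in>F. ltrans f S))"

end

theory Submission
  imports Defs
begin

abbreviation ratio :: "'a set \<Rightarrow> 'a set \<Rightarrow> real" where
  "ratio B K \<equiv> real (card (B \<inter> K)) / real (card K)"

lemma ltrans_card: "card (ltrans g X) = card X"
  unfolding ltrans_def by (rule card_image) (auto simp: inj_on_def)

lemma ltrans_finite: "finite (ltrans g X) \<longleftrightarrow> finite X"
  unfolding ltrans_def by (rule finite_image_iff) (auto simp: inj_on_def)

lemma ltrans_Int: "ltrans g X \<inter> ltrans g Y = ltrans g (X \<inter> Y)"
  unfolding ltrans_def by (auto simp: image_Int inj_on_def)

lemma ltrans_comp: "ltrans a (ltrans b X) = ltrans (a + b) X"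
  unfolding ltrans_def by (auto simp: image_image add.assoc image_def)

lemma ltrans_0: "ltrans 0 X = X"
  unfolding ltrans_def by simp

lemma ltrans_mem: "x \<in> ltrans g X \<longleftrightarrow> -g + x \<in> X"
proof
  assume "x \<in> ltrans g X" then obtain y where "y \<in> X" "x = g + y" unfolding ltrans_def by auto
  thus "-g + x \<in> X" by (simp add: add.assoc[symmetric])
next
  assume a: "-g + x \<in> X"
  have "x = g + (-g + x)" by (simp add: add.assoc[symmetric])
  thus "x \<in> ltrans g X" unfolding ltrans_def using a by (rule image_eqI)
qed

lemma card_shift_le:
  assumes "finite K" "finite L"
  shows "card (X \<inter> K) \<le> card (X \<inter> L) + card (K - L)"
proof -
  have "X \<inter> K \<subseteq> (X \<inter> L) \<union> (K - L)" by auto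
  hence "card (X \<inter> K) \<le> card ((X \<inter> L) \<union> (K - L))"
    by (rule card_mono[rotated]) (use assms in auto)
  also have "\<dots> \<le> card (X \<inter> L) + card (K - L)" by (rule card_Un_le)
  finally show ?thesis .
qed

lemma inv_bounds:
  assumes "invariant_set H e K" "t \<in> H"
  shows "real (card (ltrans t K - K)) < e * card K" "real (card (K - ltrans t K)) < e * card K"
proof -
  have f: "finite K" "K \<noteq> {}" using assms unfolding invariant_set_def by auto
  hence ck: "real (card K) > 0" by auto
  have lt: "real (card (ltrans t K - K \<union> (K - ltrans t K))) < e * card K"
    using assms ck unfolding invariant_set_def by (auto simp: divide_less_eq)
  have fin: "finite (ltrans t K - K \<union> (K - ltrans t K))" using f by (auto simp: ltrans_finite)
  have "card (ltrans t K - K) \<le> card (ltrans t K - K \<union> (K - ltrans t K))"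
    by (rule card_mono[OF fin]) auto
  thus "real (card (ltrans t K - K)) < e * card K" using lt by linarith
  have "card (K - ltrans t K) \<le> card (ltrans t K - K \<union> (K - ltrans t K))"
    by (rule card_mono[OF fin]) auto
  thus "real (card (K - ltrans t K)) < e * card K" using lt by linarith
qed

lemma inv_mono: "invariant_set H e K \<Longrightarrow> H' \<subseteq> H \<Longrightarrow> e \<le> e' \<Longrightarrow> invariant_set H' e' K"
  unfolding invariant_set_def by fastforce

lemma ratio_le1: "finite K \<Longrightarrow> ratio B K \<le> 1"
  by (cases "card K = 0") (auto simp: divide_le_eq card_mono)

lemma bd_bdd: "bdd_above {\<alpha>. \<forall>H \<epsilon>. finite H \<and> \<epsilon> > 0 \<longrightarrow>
      (\<exists>K. invariant_set H \<epsilon> K \<and> ratio B K \<ge> \<alpha>)}"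
proof (rule bdd_aboveI[where M=1])
  fix x assume "x \<in> {\<alpha>. \<forall>H \<epsilon>. finite H \<and> \<epsilon> > 0 \<longrightarrow>
      (\<exists>K. invariant_set H \<epsilon> K \<and> ratio B K \<ge> \<alpha>)}"
  hence "\<forall>H \<epsilon>. finite H \<and> \<epsilon> > 0 \<longrightarrow>
      (\<exists>K. invariant_set H \<epsilon> K \<and> ratio B K \<ge> x)" by simp
  hence "\<exists>K. invariant_set {} 1 K \<and> ratio B K \<ge> x" by (metis finite.emptyI zero_less_one)
  then obtain K where "invariant_set {} 1 K" "ratio B K \<ge> x" by blast
  thus "x \<le> 1" using ratio_le1[of K B] unfolding invariant_set_def by linarith
qed

lemma bd_upper:
  assumes "banach_density B < c"
  shows "\<exists>H e. finite H \<and> e > 0 \<and> (\<forall>K. invariant_set H e K \<longrightarrow> ratio B K < c)"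
proof (rule ccontr)
  assume "\<not> ?thesis"
  hence "\<forall>H \<epsilon>. finite H \<and> \<epsilon> > 0 \<longrightarrow>
      (\<exists>K. invariant_set H \<epsilon> K \<and> ratio B K \<ge> c)" by (meson not_less)
  hence "c \<in> {\<alpha>. \<forall>H \<epsilon>. finite H \<and> \<epsilon> > 0 \<longrightarrow>
      (\<exists>K. invariant_set H \<epsilon> K \<and> ratio B K \<ge> \<alpha>)}" by simp
  hence "c \<le> banach_density B" unfolding banach_density_def by (rule cSup_upper[OF _ bd_bdd])
  thus False using assms by simp
qed

lemma bd_lower:
  assumes "amenable TYPE('a::group_add)" "c < banach_density (B::'a set)" "finite H" "e > 0"
  shows "\<exists>K. invariant_set H e K \<and> ratio B K \<ge> c"
proof -
  let ?X = "{\<alpha>. \<forall>H \<epsilon>. finite H \<and> \<epsilon> > 0 \<longrightarrow>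
      (\<exists>K. invariant_set H \<epsilon> K \<and> ratio B K \<ge> \<alpha>)}"
  have "0 \<in> ?X" using assms(1) unfolding amenable_def by auto
  hence "\<exists>x\<in>?X. c < x" using assms(2) less_cSup_iff[OF _ bd_bdd] unfolding banach_density_def by blast
  then obtain x where "x \<in> ?X" "c < x" by blast
  then obtain K where "invariant_set H e K" "ratio B K \<ge> x" using assms(3,4) by blast
  moreover have "c \<le> ratio B K" using \<open>c < x\<close> \<open>ratio B K \<ge> x\<close> by linarith
  ultimately show ?thesis by blast
qed

lemma lbd_syndetic:
  assumes am: "amenable TYPE('a::group_add)" and fF: "finite F" and ne: "F \<noteq> {}"
    and cov: "UNIV = (\<Union>f\<in>F. ltrans f (S::'a set))"
  shows "lower_banach_density S \<ge> 1 / real (card F)"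
proof -
  let ?X = "{\<alpha>. \<exists>H \<epsilon>. finite H \<and> \<epsilon> > 0 \<and>
      (\<forall>K. invariant_set H \<epsilon> K \<longrightarrow> real (card (S \<inter> K)) / real (card K) \<ge> \<alpha>)}"
  have bdd: "bdd_above ?X"
  proof (rule bdd_aboveI[where M=1])
    fix x assume "x \<in> ?X"
    then obtain H e where He: "finite H" "e > 0" "\<forall>K. invariant_set H e K \<longrightarrow> ratio S K \<ge> x" by blast
    then obtain K where K: "invariant_set H e K" using am unfolding amenable_def by blast
    hence "finite K" unfolding invariant_set_def by simp
    thus "x \<le> 1" using He(3) K ratio_le1[of K S] by fastforce
  qed
  have c0: "real (card F) > 0" using fF ne by (simp add: card_gt_0_iff)
  have mem: "1 / real (card F) - d \<in> ?X" if d: "d > 0" for d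
  proof -
    have "\<forall>K. invariant_set (uminus ` F) d K \<longrightarrow> ratio S K \<ge> 1 / real (card F) - d"
    proof (intro allI impI)
      fix K assume K: "invariant_set (uminus ` F) d K"
      hence fK: "finite K" and Kne: "K \<noteq> {}" unfolding invariant_set_def by auto
      hence cK: "real (card K) > 0" by (simp add: card_gt_0_iff)
      have each: "real (card (ltrans f S \<inter> K)) \<le> real (card (S \<inter> K)) + d * card K" if f: "f \<in> F" for f
      proof -
        have "ltrans f S \<inter> K = ltrans f (S \<inter> ltrans (-f) K)"
          by (simp add: ltrans_Int[symmetric] ltrans_comp ltrans_0)
        hence "card (ltrans f S \<inter> K) = card (S \<inter> ltrans (-f) K)" by (simp add: ltrans_card)
        also have "\<dots> \<le> card (S \<inter> K) + card (ltrans (-f) K - K)"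
          by (rule card_shift_le) (use fK in \<open>auto simp: ltrans_finite\<close>)
        finally have "real (card (ltrans f S \<inter> K)) \<le> real (card (S \<inter> K)) + real (card (ltrans (-f) K - K))"
          by linarith
        moreover have "real (card (ltrans (-f) K - K)) < d * card K"
          by (rule inv_bounds(1)[OF K]) (use f in auto)
        ultimately show ?thesis by linarith
      qed
      have "K \<subseteq> (\<Union>f\<in>F. ltrans f S \<inter> K)" using cov by blast
      hence "card K \<le> card (\<Union>f\<in>F. ltrans f S \<inter> K)"
        by (rule card_mono[rotated]) (use fF fK in auto)
      also have "\<dots> \<le> (\<Sum>f\<in>F. card (ltrans f S \<inter> K))" by (rule card_UN_le[OF fF])
      finally have "real (card K) \<le> (\<Sum>f\<in>F. real (card (ltrans f S \<inter> K)))"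
        by (metis of_nat_le_iff of_nat_sum)
      also have "\<dots> \<le> (\<Sum>f\<in>F. real (card (S \<inter> K)) + d * card K)"
        by (rule sum_mono) (rule each)
      also have "\<dots> = real (card F) * (real (card (S \<inter> K)) + d * card K)" by simp
      finally have ineq: "real (card K) \<le> real (card F) * (real (card (S \<inter> K)) + d * card K)" .
      have "1 / real (card F) \<le> ratio S K + d"
        using ineq c0 cK by (simp add: field_simps)
      thus "ratio S K \<ge> 1 / real (card F) - d" by linarith
    qed
    moreover have "finite (uminus ` F)" using fF by simp
    ultimately show ?thesis using d by blast
  qed
  show ?thesis unfolding lower_banach_density_def
  proof (rule field_le_epsilon)
    fix e :: real assume e: "e > 0"
    have "1 / real (card F) - e \<le> Sup ?X" by (rule cSup_upper[OF mem[OF e] bdd])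
    thus "1 / real (card F) \<le> Sup ?X + e" by linarith
  qed
qed

lemma sum_ind_real: "finite A \<Longrightarrow> (\<Sum>x\<in>A. indicator B x :: real) = real (card (A \<inter> B))"
  by (simp add: indicator_def sum.If_cases)

lemma CS_count:
  assumes fP: "finite P" and sub: "\<And>j. j < m \<Longrightarrow> S j \<subseteq> P"
  shows "(\<Sum>j<m. real (card (S j)))^2 \<le> real (card P) * (\<Sum>j<m. \<Sum>k<m. real (card (S j \<inter> S k)))"
proof -
  define f where "f x = (\<Sum>j<m. indicator (S j) x :: real)" for x
  have fin: "finite (S j)" if "j < m" for j using sub[OF that] fP finite_subset by blast
  have 1: "(\<Sum>x\<in>P. f x) = (\<Sum>j<m. real (card (S j)))"
  proof -
    have "(\<Sum>x\<in>P. f x) = (\<Sum>j<m. \<Sum>x\<in>P. indicator (S j) x :: real)"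
      unfolding f_def by (rule sum.swap)
    also have "\<dots> = (\<Sum>j<m. real (card (S j)))"
    proof (rule sum.cong[OF refl])
      fix j assume "j \<in> {..<m}"
      hence "S j \<subseteq> P" using sub by auto
      thus "(\<Sum>x\<in>P. indicator (S j) x :: real) = real (card (S j))"
        using fP by (simp add: sum_ind_real Int_absorb1 Int_commute)
    qed
    finally show ?thesis .
  qed
  have 2: "(\<Sum>x\<in>P. (f x)^2) = (\<Sum>j<m. \<Sum>k<m. real (card (S j \<inter> S k)))"
  proof -
    have "(\<Sum>x\<in>P. (f x)^2) = (\<Sum>x\<in>P. \<Sum>j<m. \<Sum>k<m. indicator (S j \<inter> S k) x :: real)"
      unfolding f_def power2_eq_square sum_product by (simp add: indicator_inter_arith)
    also have "\<dots> = (\<Sum>j<m. \<Sum>x\<in>P. \<Sum>k<m. indicator (S j \<inter> S k) x :: real)" by (rule sum.swap)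
    also have "\<dots> = (\<Sum>j<m. \<Sum>k<m. \<Sum>x\<in>P. indicator (S j \<inter> S k) x :: real)"
      by (simp add: sum.swap[of _ P])
    also have "\<dots> = (\<Sum>j<m. \<Sum>k<m. real (card (S j \<inter> S k)))"
    proof (intro sum.cong refl)
      fix j k assume "j \<in> {..<m}" "k \<in> {..<m}"
      hence "S j \<inter> S k \<subseteq> P" using sub by auto
      thus "(\<Sum>x\<in>P. indicator (S j \<inter> S k) x :: real) = real (card (S j \<inter> S k))"
        using fP by (simp add: sum_ind_real Int_absorb1 Int_commute)
    qed
    finally show ?thesis .
  qed
  have "(\<Sum>x\<in>P. f x)^2 \<le> (\<Sum>x\<in>P. (f x)^2) * real (card P)"
    by (rule sum_squared_le_sum_of_squares)
  thus ?thesis using 1 2 by (simp add: mult.commute)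
qed

lemma final_alg:
  fixes m b T e :: real
  assumes "m \<ge> 1" "b \<ge> 0" "e \<ge> 0" "T \<ge> m * b" "T^2 \<le> T + m * (m - 1) * e"
    "m * b^2 - b - (m - 1) * e > 0"
  shows False
proof -
  have "(m - 1) * e \<ge> 0" using assms by simp
  hence "b * (m * b - 1) > 0" using assms(6) by (simp add: power2_eq_square algebra_simps)
  hence mb: "m * b > 1" using assms(2) by (simp add: zero_less_mult_iff)
  have "(T - m*b) * (T + m*b - 1) \<ge> 0" using assms(4) mb by simp
  hence "T^2 - T \<ge> m * (m * b^2 - b)" by (simp add: power2_eq_square algebra_simps)
  hence "m * (m * b^2 - b) \<le> m * ((m - 1) * e)" using assms(5) by (simp add: algebra_simps)
  hence "m * b^2 - b \<le> (m - 1) * e" using assms(1) by simp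
  thus False using assms(6) by simp
qed

lemma prod_le_factor:
  fixes y :: "nat \<Rightarrow> real"
  assumes "finite I" "i0 \<in> I" "\<forall>i\<in>I. 0 \<le> y i \<and> y i \<le> 1"
  shows "prod y I \<le> y i0"
proof -
  have "prod y I = y i0 * prod y (I - {i0})" using assms by (simp add: prod.remove)
  moreover have "prod y (I - {i0}) \<le> 1" using assms by (intro prod_le_1) auto
  moreover have "prod y (I - {i0}) \<ge> 0" using assms by (intro prod_nonneg) auto
  ultimately show ?thesis using assms by (simp add: mult_left_le)
qed

lemma coord1:
  assumes K: "invariant_set H e K" "-g \<in> H" "e \<le> d" "ratio B K \<ge> c"
  shows "real (card (ltrans g B \<inter> K)) \<ge> (c - d) * card K"
proof -
  have fK: "finite K" "K \<noteq> {}" using K unfolding invariant_set_def by auto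
  hence cK: "real (card K) > 0" by (simp add: card_gt_0_iff)
  have "ltrans g B \<inter> K = ltrans g (B \<inter> ltrans (-g) K)"
    by (simp add: ltrans_Int[symmetric] ltrans_comp ltrans_0)
  hence eq: "card (ltrans g B \<inter> K) = card (B \<inter> ltrans (-g) K)" by (simp add: ltrans_card)
  have "card (B \<inter> K) \<le> card (B \<inter> ltrans (-g) K) + card (K - ltrans (-g) K)"
    by (rule card_shift_le) (use fK in \<open>auto simp: ltrans_finite\<close>)
  moreover have "real (card (K - ltrans (-g) K)) < e * card K" by (rule inv_bounds(2)[OF K(1,2)])
  moreover have "e * card K \<le> d * card K" using K(3) cK by simp
  moreover have "real (card (B \<inter> K)) \<ge> c * card K" using K(4) cK by (simp add: field_simps)
  ultimately show ?thesis using eq by (simp add: algebra_simps)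
qed

lemma coord2:
  assumes K: "invariant_set H e K" "-g \<in> H" "e \<le> d" "ratio (B \<inter> ltrans (-g + g') B) K < c"
  shows "real (card (ltrans g B \<inter> ltrans g' B \<inter> K)) < (c + d) * card K"
proof -
  have fK: "finite K" "K \<noteq> {}" using K unfolding invariant_set_def by auto
  hence cK: "real (card K) > 0" by (simp add: card_gt_0_iff)
  have g': "ltrans g' B = ltrans g (ltrans (-g + g') B)"
    by (simp add: ltrans_comp add.assoc[symmetric])
  have "ltrans g B \<inter> ltrans g' B \<inter> K = ltrans g ((B \<inter> ltrans (-g + g') B) \<inter> ltrans (-g) K)"
    unfolding g' by (simp add: ltrans_Int[symmetric] ltrans_comp ltrans_0)
  hence eq: "card (ltrans g B \<inter> ltrans g' B \<inter> K) = card ((B \<inter> ltrans (-g + g') B) \<inter> ltrans (-g) K)"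
    by (simp add: ltrans_card)
  have "card ((B \<inter> ltrans (-g + g') B) \<inter> ltrans (-g) K) \<le> card ((B \<inter> ltrans (-g + g') B) \<inter> K) + card (ltrans (-g) K - K)"
    by (rule card_shift_le) (use fK in \<open>auto simp: ltrans_finite\<close>)
  moreover have "real (card (ltrans (-g) K - K)) < e * card K" by (rule inv_bounds(1)[OF K(1,2)])
  moreover have "e * card K \<le> d * card K" using K(3) cK by simp
  moreover have "real (card ((B \<inter> ltrans (-g + g') B) \<inter> K)) < c * card K" using K(4) cK by (simp add: field_simps)
  ultimately show ?thesis using eq by (simp add: algebra_simps)
qed

lemma exists_delta:
  fixes \<alpha> :: "nat \<Rightarrow> real" and m \<epsilon> :: real
  assumes fI: "finite I" and pos: "\<forall>i\<in>I. \<alpha> i > 0"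
    and gap: "m * (\<Prod>i\<in>I. \<alpha> i)^2 - (\<Prod>i\<in>I. \<alpha> i) - (m - 1) * \<epsilon> > 0"
  shows "\<exists>d>0. (\<forall>i\<in>I. d < \<alpha> i / 2) \<and>
     m * (\<Prod>i\<in>I. \<alpha> i - 2*d)^2 - (\<Prod>i\<in>I. \<alpha> i - 2*d) - (m - 1) * (\<epsilon> + 2*d) > 0"
proof -
  define F where "F d = m * (\<Prod>i\<in>I. \<alpha> i - 2*d)^2 - (\<Prod>i\<in>I. \<alpha> i - 2*d) - (m - 1) * (\<epsilon> + 2*d)" for d :: real
  have "(F \<longlongrightarrow> F 0) (at_right 0)" unfolding F_def
    by (intro tendsto_intros)
  moreover have "F 0 > 0" using gap by (simp add: F_def)
  ultimately have ev1: "eventually (\<lambda>d. F d > 0) (at_right 0)" by (rule order_tendstoD(1))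
  have "\<forall>i\<in>I. eventually (\<lambda>d. d < \<alpha> i / 2) (at_right (0::real))"
  proof
    fix i assume "i \<in> I"
    hence "0 < \<alpha> i / 2" using pos by simp
    moreover have "((\<lambda>d::real. d) \<longlongrightarrow> 0) (at_right 0)" by (rule tendsto_ident_at)
    ultimately show "eventually (\<lambda>d. d < \<alpha> i / 2) (at_right (0::real))"
      using order_tendstoD(2) by blast
  qed
  hence ev2: "eventually (\<lambda>d. \<forall>i\<in>I. d < \<alpha> i / 2) (at_right (0::real))"
    by (rule eventually_ball_finite[OF fI])
  have "eventually (\<lambda>d. F d > 0 \<and> (\<forall>i\<in>I. d < \<alpha> i / 2)) (at_right (0::real))"
    using ev1 ev2 by (rule eventually_conj)
  then obtain b where b: "b > 0" "\<forall>y>0. y < b \<longrightarrow> F y > 0 \<and> (\<forall>i\<in>I. y < \<alpha> i / 2)"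
    unfolding eventually_at_right_field by auto
  hence "F (b/2) > 0 \<and> (\<forall>i\<in>I. b/2 < \<alpha> i / 2)" using b(2)[rule_format, of "b/2"] by simp
  thus ?thesis using b(1) unfolding F_def by (intro exI[of _ "b/2"]) auto
qed

lemma sep_bound:
  fixes A :: "nat \<Rightarrow> 'a::group_add set" and gs :: "'a list" and \<epsilon> :: real
  assumes am: "amenable TYPE('a)" and fI: "finite I"
    and pos: "\<forall>i\<in>I. banach_density (A i) > 0" and e0: "0 \<le> \<epsilon>"
    and sep: "\<forall>j k. j < k \<longrightarrow> k < length gs \<longrightarrow> -(gs!j) + gs!k \<notin> (\<Inter>i\<in>I. Delta \<epsilon> (A i))"
    and m1: "length gs \<ge> 1"
  shows "real (length gs) * ((\<Prod>i\<in>I. banach_density (A i))^2 - \<epsilon>) \<le> (\<Prod>i\<in>I. banach_density (A i)) - \<epsilon>"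
proof (rule ccontr)
  define m where "m = length gs"
  define \<alpha> where "\<alpha> i = banach_density (A i)" for i
  define \<beta> where "\<beta> = (\<Prod>i\<in>I. \<alpha> i)"
  assume "\<not> ?thesis"
  hence "real m * (\<beta>^2 - \<epsilon>) > \<beta> - \<epsilon>" unfolding m_def \<beta>_def \<alpha>_def by simp
  hence gap: "real m * \<beta>^2 - \<beta> - (real m - 1) * \<epsilon> > 0" by (simp add: algebra_simps)
  obtain d where d: "d > 0" "\<forall>i\<in>I. d < \<alpha> i / 2"
    "real m * (\<Prod>i\<in>I. \<alpha> i - 2*d)^2 - (\<Prod>i\<in>I. \<alpha> i - 2*d) - (real m - 1) * (\<epsilon> + 2*d) > 0"
    using exists_delta[OF fI _ gap[unfolded \<beta>_def]] pos unfolding \<alpha>_def by blast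
  define Pr where "Pr = {(j,k). j < k \<and> k < m}"
  have fPr: "finite Pr"
    by (rule finite_subset[of _ "{..<m} \<times> {..<m}"]) (auto simp: Pr_def)
  define h where "h p = -(gs!fst p) + gs!snd p" for p
  have "\<forall>p\<in>Pr. \<exists>t. fst t \<in> I \<and> finite (fst (snd t)) \<and> snd (snd t) > 0 \<and>
     (\<forall>K. invariant_set (fst (snd t)) (snd (snd t)) K \<longrightarrow> ratio (A (fst t) \<inter> ltrans (h p) (A (fst t))) K < \<epsilon> + d)"
  proof
    fix p assume "p \<in> Pr"
    hence "h p \<notin> (\<Inter>i\<in>I. Delta \<epsilon> (A i))" using sep unfolding h_def Pr_def m_def by auto
    then obtain i where i: "i \<in> I" "\<not> banach_density (A i \<inter> ltrans (h p) (A i)) > \<epsilon>"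
      unfolding Delta_def by auto
    hence "banach_density (A i \<inter> ltrans (h p) (A i)) < \<epsilon> + d" using d(1) by simp
    from bd_upper[OF this] obtain H e where "finite H" "e > 0"
      "\<forall>K. invariant_set H e K \<longrightarrow> ratio (A i \<inter> ltrans (h p) (A i)) K < \<epsilon> + d" by blast
    thus "\<exists>t. fst t \<in> I \<and> finite (fst (snd t)) \<and> snd (snd t) > 0 \<and>
     (\<forall>K. invariant_set (fst (snd t)) (snd (snd t)) K \<longrightarrow> ratio (A (fst t) \<inter> ltrans (h p) (A (fst t))) K < \<epsilon> + d)"
      using i(1) by (intro exI[of _ "(i, H, e)"]) simp
  qed
  then obtain T where T: "\<forall>p\<in>Pr. fst (T p) \<in> I \<and> finite (fst (snd (T p))) \<and> snd (snd (T p)) > 0 \<and>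
     (\<forall>K. invariant_set (fst (snd (T p))) (snd (snd (T p))) K \<longrightarrow>
        ratio (A (fst (T p)) \<inter> ltrans (h p) (A (fst (T p)))) K < \<epsilon> + d)"
    by (rule bchoice[elim_format]) blast
  define H where "H = (\<Union>p\<in>Pr. fst (snd (T p))) \<union> (\<lambda>j. -(gs!j)) ` {..<m}"
  define e where "e = Min (insert d ((\<lambda>p. snd (snd (T p))) ` Pr))"
  have fH: "finite H" unfolding H_def using fPr T by auto
  have e_pos: "e > 0" unfolding e_def using fPr T d(1) by (subst Min_gr_iff) auto
  have e_le_d: "e \<le> d" unfolding e_def using fPr by (intro Min_le) auto
  have e_le: "e \<le> snd (snd (T p))" if "p \<in> Pr" for p unfolding e_def using fPr that by (intro Min_le) auto
  have "\<forall>i\<in>I. \<exists>K. invariant_set H e K \<and> ratio (A i) K \<ge> \<alpha> i - d"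
  proof
    fix i assume "i \<in> I"
    show "\<exists>K. invariant_set H e K \<and> ratio (A i) K \<ge> \<alpha> i - d"
      by (rule bd_lower[OF am _ fH e_pos]) (use d(1) in \<open>simp add: \<alpha>_def\<close>)
  qed
  then obtain K where K: "\<forall>i\<in>I. invariant_set H e (K i) \<and> ratio (A i) (K i) \<ge> \<alpha> i - d"
    by (rule bchoice[elim_format]) blast
  have fK: "finite (K i)" and cK: "real (card (K i)) > 0" if "i \<in> I" for i
    using K that unfolding invariant_set_def by (auto simp: card_gt_0_iff)
  define P where "P = PiE I K"
  define S where "S j = PiE I (\<lambda>i. ltrans (gs!j) (A i) \<inter> K i)" for j
  define cP where "cP = real (card P)"
  have cP_eq: "cP = (\<Prod>i\<in>I. real (card (K i)))" unfolding cP_def P_def by (simp add: card_PiE[OF fI])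
  have cP_pos: "cP > 0" unfolding cP_eq using cK by (intro prod_pos) auto
  have fP: "finite P" unfolding P_def using fI fK by (intro finite_PiE) auto
  have subP: "S j \<subseteq> P" for j unfolding S_def P_def by (intro PiE_mono) auto
  define s where "s j = real (card (S j)) / cP" for j
  define q where "q j k = real (card (S j \<inter> S k)) / cP" for j k
  define \<beta>' where "\<beta>' = (\<Prod>i\<in>I. \<alpha> i - 2*d)"
  have b0: "\<beta>' \<ge> 0" unfolding \<beta>'_def using d(2) by (intro prod_nonneg) auto
  have s_low: "s j \<ge> \<beta>'" if j: "j < m" for j
  proof -
    have "s j = (\<Prod>i\<in>I. real (card (ltrans (gs!j) (A i) \<inter> K i)) / real (card (K i)))"
      unfolding s_def S_def cP_eq by (simp add: card_PiE[OF fI] prod_dividef)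
    moreover have "(\<Prod>i\<in>I. \<alpha> i - 2*d) \<le> (\<Prod>i\<in>I. real (card (ltrans (gs!j) (A i) \<inter> K i)) / real (card (K i)))"
    proof (rule prod_mono)
      fix i assume i: "i \<in> I"
      have "-(gs!j) \<in> H" unfolding H_def using j by auto
      hence "real (card (ltrans (gs!j) (A i) \<inter> K i)) \<ge> (\<alpha> i - d - d) * card (K i)"
        using K i e_le_d by (intro coord1[of H e]) auto
      show "0 \<le> \<alpha> i - 2 * d \<and> \<alpha> i - 2 * d \<le> real (card (ltrans (gs!j) (A i) \<inter> K i)) / real (card (K i))"
      proof
        show "0 \<le> \<alpha> i - 2 * d" using d(2) i by fastforce
        show "\<alpha> i - 2 * d \<le> real (card (ltrans (gs!j) (A i) \<inter> K i)) / real (card (K i))"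
          using cK[OF i] \<open>real (card (ltrans (gs!j) (A i) \<inter> K i)) \<ge> (\<alpha> i - d - d) * card (K i)\<close>
          by (simp add: field_simps)
      qed
    qed
    ultimately show ?thesis unfolding \<beta>'_def by simp
  qed
  have q_up: "q j k \<le> \<epsilon> + 2*d" if jk: "j < k" "k < m" for j k
  proof -
    have p: "(j,k) \<in> Pr" using jk by (simp add: Pr_def)
    define i0 where "i0 = fst (T (j,k))"
    have i0: "i0 \<in> I" using T p unfolding i0_def by blast
    define y where "y i = real (card (ltrans (gs!j) (A i) \<inter> ltrans (gs!k) (A i) \<inter> K i)) / real (card (K i))" for i
    have "q j k = (\<Prod>i\<in>I. y i)"
    proof -
      have "S j \<inter> S k = PiE I (\<lambda>i. ltrans (gs!j) (A i) \<inter> ltrans (gs!k) (A i) \<inter> K i)"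
        unfolding S_def PiE_Int by (intro PiE_cong) auto
      thus ?thesis unfolding q_def y_def cP_eq by (simp add: card_PiE[OF fI] prod_dividef)
    qed
    also have "\<dots> \<le> y i0"
    proof (rule prod_le_factor[OF fI i0])
      show "\<forall>i\<in>I. 0 \<le> y i \<and> y i \<le> 1"
      proof
        fix i assume i: "i \<in> I"
        have "card (ltrans (gs!j) (A i) \<inter> ltrans (gs!k) (A i) \<inter> K i) \<le> card (K i)"
          by (rule card_mono[OF fK[OF i]]) auto
        thus "0 \<le> y i \<and> y i \<le> 1" unfolding y_def using cK[OF i] by (simp add: divide_le_eq)
      qed
    qed
    also have "y i0 < \<epsilon> + 2*d"
    proof -
      have T1: "\<forall>Ka. invariant_set (fst (snd (T (j,k)))) (snd (snd (T (j,k)))) Ka \<longrightarrow>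
        ratio (A i0 \<inter> ltrans (h (j,k)) (A i0)) Ka < \<epsilon> + d" using T p unfolding i0_def by blast
      have inv: "invariant_set H e (K i0)" using K i0 by blast
      have "invariant_set (fst (snd (T (j,k)))) (snd (snd (T (j,k)))) (K i0)"
        by (rule inv_mono[OF inv]) (use p e_le in \<open>auto simp: H_def\<close>)
      hence r: "ratio (A i0 \<inter> ltrans (-(gs!j) + gs!k) (A i0)) (K i0) < \<epsilon> + d"
        using T1 unfolding h_def by simp
      have "-(gs!j) \<in> H" unfolding H_def using jk by auto
      hence "real (card (ltrans (gs!j) (A i0) \<inter> ltrans (gs!k) (A i0) \<inter> K i0)) < (\<epsilon> + d + d) * card (K i0)"
        by (intro coord2[OF inv _ e_le_d r])
      thus ?thesis unfolding y_def using cK[OF i0] by (simp add: divide_less_eq algebra_simps)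
    qed
    finally show ?thesis by simp
  qed
  have q_sym: "q j k = q k j" for j k unfolding q_def by (simp add: Int_commute)
  have q_diag: "q j j = s j" for j unfolding q_def s_def by simp
  have row: "(\<Sum>k<m. q j k) \<le> s j + (real m - 1) * (\<epsilon> + 2*d)" if j: "j < m" for j
  proof -
    have "(\<Sum>k<m. q j k) = q j j + (\<Sum>k\<in>{..<m} - {j}. q j k)"
      using j by (simp add: sum.remove)
    also have "(\<Sum>k\<in>{..<m} - {j}. q j k) \<le> real (card ({..<m} - {j})) * (\<epsilon> + 2*d)"
    proof (rule sum_bounded_above)
      fix k assume k: "k \<in> {..<m} - {j}"
      show "q j k \<le> \<epsilon> + 2*d"
      proof (cases "j < k")
        case True thus ?thesis using k q_up by auto
      next
        case False hence "k < j" using k by auto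
        thus ?thesis using j q_up[of k j] q_sym by auto
      qed
    qed
    moreover have "real (card ({..<m} - {j})) = real m - 1" using j by simp
    ultimately show ?thesis using q_diag by simp
  qed
  define Tt where "Tt = (\<Sum>j<m. s j)"
  have T_low: "Tt \<ge> real m * \<beta>'"
  proof -
    have "real (card {..<m}) * \<beta>' \<le> Tt" unfolding Tt_def by (rule sum_bounded_below) (use s_low in auto)
    thus ?thesis by simp
  qed
  have CS: "(\<Sum>j<m. real (card (S j)))^2 \<le> cP * (\<Sum>j<m. \<Sum>k<m. real (card (S j \<inter> S k)))"
    unfolding cP_def by (rule CS_count[OF fP subP])
  have "Tt^2 = (\<Sum>j<m. real (card (S j)))^2 / cP^2"
    unfolding Tt_def s_def by (simp add: sum_divide_distrib[symmetric] power_divide)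
  also have "\<dots> \<le> (\<Sum>j<m. \<Sum>k<m. real (card (S j \<inter> S k))) / cP"
    using CS cP_pos by (simp add: divide_le_eq power2_eq_square field_simps)
  also have "\<dots> = (\<Sum>j<m. \<Sum>k<m. q j k)"
    unfolding q_def by (simp add: sum_divide_distrib)
  also have "\<dots> \<le> (\<Sum>j<m. s j + (real m - 1) * (\<epsilon> + 2*d))"
    by (rule sum_mono) (use row in auto)
  also have "\<dots> = Tt + real m * (real m - 1) * (\<epsilon> + 2*d)"
    unfolding Tt_def by (simp add: sum.distrib)
  finally have T2: "Tt^2 \<le> Tt + real m * (real m - 1) * (\<epsilon> + 2*d)" .
  show False
    by (rule final_alg[OF _ b0 _ T_low T2]) (use m1 e0 d d(3) in \<open>auto simp: m_def \<beta>'_def\<close>)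
qed

theorem mainTheorem10:
  fixes A :: "nat \<Rightarrow> 'a::group_add set" and n :: nat and \<epsilon> :: real
  assumes "amenable TYPE('a)"
    and "\<forall>i\<in>{1..n}. banach_density (A i) > 0"
    and "0 \<le> \<epsilon>"
    and "\<epsilon> < (\<Prod>i\<in>{1..n}. banach_density (A i))^2"
  shows "syndetic (nat \<lfloor>((\<Prod>i\<in>{1..n}. banach_density (A i)) - \<epsilon>) /
                          ((\<Prod>i\<in>{1..n}. banach_density (A i))^2 - \<epsilon>)\<rfloor>)
                  (\<Inter>i\<in>{1..n}. Delta \<epsilon> (A i))
       \<and> lower_banach_density (\<Inter>i\<in>{1..n}. Delta \<epsilon> (A i))
           \<ge> 1 / real (nat \<lfloor>((\<Prod>i\<in>{1..n}. banach_density (A i)) - \<epsilon>) /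
                          ((\<Prod>i\<in>{1..n}. banach_density (A i))^2 - \<epsilon>)\<rfloor>)"
proof -
  define \<beta> where "\<beta> = (\<Prod>i\<in>{1..n}. banach_density (A i))"
  define S where "S = (\<Inter>i\<in>{1..n}. Delta \<epsilon> (A i))"
  define r where "r = nat \<lfloor>(\<beta> - \<epsilon>) / (\<beta>^2 - \<epsilon>)\<rfloor>"
  have den: "\<beta>^2 - \<epsilon> > 0" using assms(4) unfolding \<beta>_def by simp
  define sepP where "sepP gs \<longleftrightarrow> (\<forall>j k. j < k \<longrightarrow> k < length gs \<longrightarrow> -(gs!j) + gs!k \<notin> S)" for gs
  have bound: "length gs \<le> r" if sp: "sepP gs" for gs
  proof (cases "length gs = 0")
    case True thus ?thesis by simp
  next
    case False
    have "real (length gs) * (\<beta>^2 - \<epsilon>) \<le> \<beta> - \<epsilon>"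
      unfolding \<beta>_def by (rule sep_bound[OF assms(1) _ assms(2,3)])
        (use sp False in \<open>auto simp: sepP_def S_def Suc_le_eq\<close>)
    hence "real (length gs) \<le> (\<beta> - \<epsilon>) / (\<beta>^2 - \<epsilon>)" using den by (simp add: pos_le_divide_eq)
    hence "int (length gs) \<le> \<lfloor>(\<beta> - \<epsilon>) / (\<beta>^2 - \<epsilon>)\<rfloor>" by (simp add: le_floor_iff)
    thus ?thesis unfolding r_def by linarith
  qed
  have "sepP []" unfolding sepP_def by simp
  then obtain k0 where k0: "\<exists>gs. sepP gs \<and> length gs = k0" "\<forall>y. (\<exists>gs. sepP gs \<and> length gs = y) \<longrightarrow> y \<le> k0"
    using Nat.ex_has_greatest_nat[of "\<lambda>k. \<exists>gs. sepP gs \<and> length gs = k" 0 r] bound by blast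
  then obtain gs where gs: "sepP gs" "length gs = k0" by blast
  have cover: "\<exists>x\<in>set gs. g \<in> ltrans x S" for g
  proof (rule ccontr)
    assume nc: "\<not> ?thesis"
    have "sepP (gs @ [g])" unfolding sepP_def
    proof (intro allI impI)
      fix j k assume jk: "j < k" "k < length (gs @ [g])"
      show "- ((gs @ [g]) ! j) + (gs @ [g]) ! k \<notin> S"
      proof (cases "k < length gs")
        case True thus ?thesis using gs(1) jk by (simp add: sepP_def nth_append)
      next
        case False
        hence "k = length gs" using jk by simp
        hence j: "j < length gs" using jk by simp
        have "g \<notin> ltrans (gs!j) S" using nc j by (meson nth_mem)
        thus ?thesis using j \<open>k = length gs\<close> by (simp add: nth_append ltrans_mem)
      qed
    qed
    hence "length (gs @ [g]) \<le> k0" using k0(2) by blast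
    thus False using gs(2) by simp
  qed
  define F where "F = set gs"
  have fF: "finite F" unfolding F_def by simp
  have cF: "card F \<le> r" unfolding F_def using card_length[of gs] bound[OF gs(1)] by linarith
  have cov: "UNIV = (\<Union>f\<in>F. ltrans f S)" unfolding F_def using cover by blast
  have ne: "F \<noteq> {}" using cov by auto
  have c1: "card F \<ge> 1" using fF ne by (simp add: Suc_le_eq card_gt_0_iff)
  have syn: "syndetic r S" unfolding syndetic_def using fF cF cov by blast
  have "lower_banach_density S \<ge> 1 / real (card F)" by (rule lbd_syndetic[OF assms(1) fF ne cov])
  moreover have "1 / real r \<le> 1 / real (card F)" using c1 cF by (simp add: frac_le)
  ultimately have "lower_banach_density S \<ge> 1 / real r" by linarith
  with syn show ?thesis unfolding r_def \<beta>_def S_def by simp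
qed

end
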